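(* The number of components of the closure $\widehat{\mathbb{L}}(p_1,q_1;\dots;p_r,q_r)$ of a Lorenz braid equals the multiplicity of $1$ as an eigenvalue (root of the characteristic polynomial) of the $(P_r+Q_r)\times(P_r+Q_r)$ permutation matrix $M$ defined as follows: index the rows by consecutive blocks of sizes $q_1,\dots,q_r,p_1,\dots,p_r$ and the columns by consecutive blocks of sizes $p_1,q_1,p_2,q_2,\dots,p_r,q_r$; for each $i$, the block of $M$ in row block $q_i$ and column block $q_i$ is $I_{q_i}$, the block in row block $p_i$ and column block $p_i$ is $I_{p_i}$, and all other blocks are zero. (This matrix $M$ equals $\lim_{t\to1}\beta_{P_r+Q_r}(\mathbb{L}(p_1,q_1;\dots;p_r,q_r))$.)
   Context: Lorenz braid: given $r\ge1$ and positive integers $p_1,q_1,\dots,p_r,q_r$, set $P_j=p_1+\cdots+p_j$, $Q_j=q_1+\cdots+q_j$. $\mathbb{L}(p_1,q_1;\dots;p_r,q_r)$ is the braid on $P_r+Q_r$ strands defined by: the top row is split into a left part of $Q_r$ points and a right part of $P_r$ points; the bottom row is split, from left to right, into consecutive parts of sizes $p_1,q_1,\dots,p_r,q_r$; the strands from the left top part are joined in order to the points of the parts of sizes $q_1,\dots,q_r$, and the strands from the right top part are joined in order to the points of the parts of sizes $p_1,\dots,p_r$; at each crossing the strand from the left top part passes over. Its closure (joining the $i$-th top point to the $i$-th bottom point for each $i$) is a Lorenz link. $\beta_n$ denotes the Burau representation $B_n\to\mathrm{GL}_n(\mathbb{Z}[t,t^{-1}])$, $\beta_n(\sigma_j)=I_{j-1}\oplus\begin{pmatrix}1-t&t\\1&0\end{pmatrix}\oplus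 I_{n-j-1}$. *)

theory Defs
  imports "HOL-Computational_Algebra.Polynomial" "Jordan_Normal_Form.Char_Poly"
begin

(* Parameters p_1,q_1,...,p_r,q_r are given as lists ps, qs of length r (0-indexed).
   psum xs j = x_1 + ... + x_j, so P_j = psum ps j, Q_j = psum qs j. *)
definition psum :: "nat list \<Rightarrow> nat \<Rightarrow> nat" where
  "psum xs j = sum_list (take j xs)"

definition lorenz_params_ok :: "nat list \<Rightarrow> nat list \<Rightarrow> bool" where
  "lorenz_params_ok ps qs \<longleftrightarrow> length ps = length qs \<and> length ps \<ge> 1
     \<and> (\<forall>x\<in>set ps. x > 0) \<and> (\<forall>x\<in>set qs. x > 0)"

definition lorenz_strands :: "nat list \<Rightarrow> nat list \<Rightarrow> nat" where
  "lorenz_strands ps qs = sum_list ps + sum_list qs"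

(* Strand endpoints of the Lorenz braid L(p_1,q_1;...;p_r,q_r) (positions 0-indexed):
   lorenz_end ps qs a = bottom position of the strand starting at top position a.
   Top: left part = positions 0..Q_r-1, right part = Q_r..Q_r+P_r-1.
   Bottom blocks from left: p_1,q_1,...,p_r,q_r; block p_{i+1} starts at P_i+Q_i,
   block q_{i+1} starts at P_{i+1}+Q_i.  The k-th left strand goes (in order) to the
   k-th point of the union of q-blocks, the k-th right strand to the k-th point of
   the union of p-blocks. *)
definition lorenz_end :: "nat list \<Rightarrow> nat list \<Rightarrow> nat \<Rightarrow> nat" where
  "lorenz_end ps qs a =
     (let r = length ps; Q = psum qs; P = psum ps in
      if a < Q r then
        (let i = (THE i. i < r \<and> Q i \<le> a \<and> a < Q (Suc i)) in P (Suc i) + a)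
      else
        (let k = a - Q r; i = (THE i. i < r \<and> P i \<le> k \<and> k < P (Suc i)) in Q i + k))"

(* Components of the closure: the closure joins bottom point j to top point j, so
   the strand starting at top a continues with the strand starting at top
   (lorenz_end a). *)
definition closure_components :: "nat \<Rightarrow> (nat \<Rightarrow> nat) \<Rightarrow> nat" where
  "closure_components n \<pi> =
     (let R = {(a, \<pi> a) | a. a < n} in card ({0..<n} // ((R \<union> R\<inverse>)\<^sup>*)))"

definition lorenz_link_components :: "nat list \<Rightarrow> nat list \<Rightarrow> nat" where
  "lorenz_link_components ps qs =
     closure_components (lorenz_strands ps qs) (lorenz_end ps qs)"

definition lorenz_M :: "nat list \<Rightarrow> nat list \<Rightarrow> int mat" where
  "lorenz_M ps qs =
     (let r = length ps; Q = psum qs; P = psum ps; n = lorenz_strands ps qs in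
      mat n n (\<lambda>(a, b).
        if (\<exists>i<r. \<exists>k. (k < qs ! i \<and> a = Q i + k \<and> b = P (Suc i) + Q i + k)
                   \<or> (k < ps ! i \<and> a = Q r + P i + k \<and> b = P i + Q i + k))
        then 1 else 0))"

end

theory Submission
  imports Defs
begin

lemma order_Xk_minus_1:
  assumes "k > 0"
  shows "order 1 ([:0,1::int:]^k - 1) = 1" and "[:0,1::int:]^k - 1 \<noteq> 0"
proof -
  let ?X = "[:0,1::int:]"
  let ?s = "(\<Sum>i<k. ?X^i)"
  have eq: "?X^k - 1 = [:-1,1:] * ?s"
    using power_diff_1_eq[of ?X k] by (simp add: one_pCons)
  have ps: "poly ?s 1 = of_nat k" by (simp add: poly_sum)
  hence s0: "?s \<noteq> 0" using assms by auto
  have o: "order 1 ?s = 0" using ps assms by (intro order_0I) auto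
  have nz: "[:-1,1::int:] * ?s \<noteq> 0" using s0 by (intro no_zero_divisors) auto
  show "?X^k - 1 \<noteq> 0" using eq nz by simp
  have "order 1 ([:-1,1::int:] * ?s) = order 1 [:-1,1::int:] + order 1 ?s"
    by (rule order_mult[OF nz])
  also have "order 1 [:-1,1::int:] = 1" using order_power_n_n[of 1 1] by simp
  finally show "order 1 (?X^k - 1) = 1" using eq o by simp
qed

definition rel :: "nat \<Rightarrow> (nat \<Rightarrow> nat) \<Rightarrow> (nat \<times> nat) set" where
  "rel n \<pi> = (let R = {(a, \<pi> a) | a. a < n} in (R \<union> R\<inverse>)\<^sup>*)"

definition reps :: "nat \<Rightarrow> (nat \<Rightarrow> nat) \<Rightarrow> nat set" where
  "reps n \<pi> = {x. x < n \<and> (\<forall>y<n. (x,y) \<in> rel n \<pi> \<longrightarrow> x \<le> y)}"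

lemma rel_sym: "(x,y) \<in> rel n \<pi> \<Longrightarrow> (y,x) \<in> rel n \<pi>"
proof -
  let ?R = "{(a, \<pi> a) | a. a < n}"
  have "sym ((?R \<union> ?R\<inverse>)\<^sup>*)" by (intro sym_rtrancl) (auto simp: sym_def)
  thus "(x,y) \<in> rel n \<pi> \<Longrightarrow> (y,x) \<in> rel n \<pi>" unfolding rel_def Let_def sym_def by blast
qed

lemma rel_trans: "(x,y) \<in> rel n \<pi> \<Longrightarrow> (y,z) \<in> rel n \<pi> \<Longrightarrow> (x,z) \<in> rel n \<pi>"
  unfolding rel_def Let_def by (meson rtrancl_trans)

lemma rel_refl: "(x,x) \<in> rel n \<pi>"
  unfolding rel_def Let_def by simp

lemma rel_edge: "a < n \<Longrightarrow> (a, \<pi> a) \<in> rel n \<pi>"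
  unfolding rel_def Let_def by (rule r_into_rtrancl) auto

lemma rel_bound:
  assumes into: "\<And>i. i < n \<Longrightarrow> \<pi> i < n" and xy: "(x,y) \<in> rel n \<pi>"
  shows "x = y \<or> (x < n \<and> y < n)"
  using xy unfolding rel_def Let_def
proof (induction rule: rtrancl_induct)
  case base then show ?case by simp
next
  case (step y z) then show ?case using into by auto
qed

lemma closure_components_reps:
  assumes into: "\<And>i. i < n \<Longrightarrow> \<pi> i < n"
  shows "closure_components n \<pi> = card (reps n \<pi>)"
proof -
  let ?E = "rel n \<pi>"
  have cc: "closure_components n \<pi> = card ({0..<n} // ?E)"
    unfolding closure_components_def rel_def Let_def by simp
  have q: "{0..<n} // ?E = (\<lambda>x. ?E``{x}) ` {0..<n}" unfolding quotient_def by auto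
  have bnd: "\<And>x y. x < n \<Longrightarrow> (x,y) \<in> ?E \<Longrightarrow> y < n" using rel_bound[of n \<pi>, OF into] by blast
  have img: "(\<lambda>x. ?E``{x}) ` reps n \<pi> = (\<lambda>x. ?E``{x}) ` {0..<n}"
  proof
    show "(\<lambda>x. ?E``{x}) ` reps n \<pi> \<subseteq> (\<lambda>x. ?E``{x}) ` {0..<n}" unfolding reps_def by auto
  next
    show "(\<lambda>x. ?E``{x}) ` {0..<n} \<subseteq> (\<lambda>x. ?E``{x}) ` reps n \<pi>"
    proof
      fix S assume "S \<in> (\<lambda>x. ?E``{x}) ` {0..<n}"
      then obtain x where x: "x < n" "S = ?E``{x}" by auto
      have fin: "finite (?E``{x})" by (rule finite_subset[of _ "{..<n}"]) (use bnd x in auto)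
      have ne: "x \<in> ?E``{x}" using rel_refl by auto
      define m where "m = Min (?E``{x})"
      have m: "m \<in> ?E``{x}" unfolding m_def using fin ne by (intro Min_in) auto
      have mle: "\<And>y. y \<in> ?E``{x} \<Longrightarrow> m \<le> y" unfolding m_def using fin by auto
      have xm: "(x,m) \<in> ?E" using m by auto
      have mn: "m < n" using bnd x xm by auto
      have eq: "?E``{m} = ?E``{x}"
        by (auto intro: rel_trans[OF xm] rel_trans[OF rel_sym[OF xm]])
      have "m \<in> reps n \<pi>" unfolding reps_def using mn mle eq by auto
      thus "S \<in> (\<lambda>x. ?E``{x}) ` reps n \<pi>" using eq x by auto
    qed
  qed
  have inj: "inj_on (\<lambda>x. ?E``{x}) (reps n \<pi>)"
  proof (rule inj_onI)
    fix x y assume x: "x \<in> reps n \<pi>" and y: "y \<in> reps n \<pi>" and e: "?E``{x} = ?E``{y}"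
    have "y \<in> ?E``{y}" using rel_refl by simp
    hence "y \<in> ?E``{x}" using e by simp
    hence "(x,y) \<in> ?E" by simp
    hence "x \<le> y" "y \<le> x" using x y rel_sym unfolding reps_def by auto
    thus "x = y" by simp
  qed
  show ?thesis unfolding cc q img[symmetric] using card_image[OF inj] by simp
qed

lemma reps_fixed:
  assumes into: "\<And>i. i < n \<Longrightarrow> \<pi> i < n"
  and fx: "\<pi> n = n"
  shows "reps (Suc n) \<pi> = insert n (reps n \<pi>)" "n \<notin> reps n \<pi>"
proof -
  let ?R = "{(a, \<pi> a) | a. a < n}"
  have R: "{(a, \<pi> a) | a. a < Suc n} = insert (n,n) ?R" using fx by (auto simp: less_Suc_eq)
  have "rel (Suc n) \<pi> = rel n \<pi>"
  proof
    show "rel n \<pi> \<subseteq> rel (Suc n) \<pi>" unfolding rel_def Let_def R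
      by (rule rtrancl_mono) auto
  next
    show "rel (Suc n) \<pi> \<subseteq> rel n \<pi>"
    proof (rule subrelI)
      fix x y assume "(x,y) \<in> rel (Suc n) \<pi>"
      hence "(x,y) \<in> (insert (n,n) ?R \<union> (insert (n,n) ?R)\<inverse>)\<^sup>*" unfolding rel_def Let_def R .
      thus "(x,y) \<in> rel n \<pi>"
      proof (induction rule: rtrancl_induct)
        case base then show ?case by (rule rel_refl)
      next
        case (step y z)
        have "(y,z) = (n,n) \<or> (y,z) \<in> ?R \<union> ?R\<inverse>" using step(2) by blast
        then show ?case
        proof
          assume "(y,z) = (n,n)" thus ?case using step(3) by simp
        next
          assume "(y,z) \<in> ?R \<union> ?R\<inverse>"
          hence "(y,z) \<in> rel n \<pi>" unfolding rel_def Let_def by (rule r_into_rtrancl)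
          thus ?case using step(3) rel_trans by blast
        qed
      qed
    qed
  qed
  moreover have "\<And>y. (n,y) \<in> rel n \<pi> \<Longrightarrow> y = n" using rel_bound[of n \<pi>, OF into] by blast
  moreover have "\<And>x. x < n \<Longrightarrow> (x,n) \<notin> rel n \<pi>" using rel_bound[of n \<pi>, OF into] by blast
  ultimately show "reps (Suc n) \<pi> = insert n (reps n \<pi>)"
    unfolding reps_def by (auto simp: less_Suc_eq)
  show "n \<notin> reps n \<pi>" unfolding reps_def by simp
qed

lemma reps_nonfixed:
  assumes into: "\<And>i. i < Suc n \<Longrightarrow> \<pi> i < Suc n"
  and inj: "inj_on \<pi> {..<Suc n}"
  and a: "a < n" "\<pi> a = n" and b: "b < n" "\<pi> n = b"
  shows "reps (Suc n) \<pi> = reps n (\<pi>(a := b))"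
proof -
  define p where "p = \<pi>(a := b)"
  have pa: "p a = b" and po: "\<And>x. x \<noteq> a \<Longrightarrow> p x = \<pi> x" unfolding p_def by auto
  let ?E = "rel (Suc n) \<pi>"
  let ?R' = "{(x, p x) | x. x < n}"
  have an: "(a,n) \<in> ?E" using rel_edge[of a "Suc n" \<pi>] a by simp
  have nb: "(n,b) \<in> ?E" using rel_edge[of n "Suc n" \<pi>] b by simp
  have sub: "?R' \<union> ?R'\<inverse> \<subseteq> ?E"
  proof -
    have "?R' \<subseteq> ?E"
    proof
      fix u assume "u \<in> ?R'"
      then obtain x where x: "x < n" "u = (x, p x)" by auto
      show "u \<in> ?E"
      proof (cases "x = a")
        case True
        then show ?thesis using x an nb rel_trans pa by auto
      next
        case False
        then show ?thesis using x rel_edge[of x "Suc n" \<pi>] po by auto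
      qed
    qed
    thus ?thesis using rel_sym by blast
  qed
  have dir1: "rel n p \<subseteq> ?E"
  proof -
    have "rel n p \<subseteq> ?E\<^sup>*" unfolding rel_def[of n p] Let_def by (rule rtrancl_mono[OF sub])
    also have "?E\<^sup>* = ?E" unfolding rel_def[of "Suc n"] Let_def by simp
    finally show ?thesis .
  qed
  have pinj: "\<And>x. x < Suc n \<Longrightarrow> \<pi> x = n \<Longrightarrow> x = a"
    using inj a by (metis inj_on_def lessThan_iff less_SucI)
  have dir2: "\<And>x y. (x,y) \<in> ?E \<Longrightarrow> x < n \<Longrightarrow>
     (y < n \<longrightarrow> (x,y) \<in> rel n p) \<and> (y = n \<longrightarrow> (x,a) \<in> rel n p \<and> (x,b) \<in> rel n p)"
  proof -
    fix x y assume xy: "(x,y) \<in> ?E" and xn: "x < n"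
    have ab: "(a,b) \<in> rel n p" using rel_edge[of a n p] a pa by simp
    have yb: "y < Suc n" using rel_bound[of "Suc n" \<pi> x y, OF into xy] xn by auto
    from xy yb show "(y < n \<longrightarrow> (x,y) \<in> rel n p) \<and> (y = n \<longrightarrow> (x,a) \<in> rel n p \<and> (x,b) \<in> rel n p)"
      unfolding rel_def[of "Suc n"] Let_def
    proof (induction rule: rtrancl_induct)
      case base then show ?case using xn rel_refl by auto
    next
      case (step y z)
      have "(x,y) \<in> ?E" using step(1) unfolding rel_def Let_def .
      hence ysn: "y < Suc n" using rel_bound[of "Suc n" \<pi> x y, OF into] xn by auto
      from step(2) have edge: "(y < Suc n \<and> z = \<pi> y) \<or> (z < Suc n \<and> y = \<pi> z)" by auto
      have IH: "(y < n \<longrightarrow> (x,y) \<in> rel n p) \<and> (y = n \<longrightarrow> (x,a) \<in> rel n p \<and> (x,b) \<in> rel n p)"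
        using step(3) ysn by simp
      show ?case
      proof (cases "y = n")
        case yn: True
        show ?thesis
        proof (cases "z = n")
          case True then show ?thesis using IH yn by simp
        next
          case False
          hence "z = b \<or> z = a" using edge yn b pinj by auto
          then show ?thesis using IH yn False by auto
        qed
      next
        case yn: False
        hence yl: "y < n" using ysn by simp
        hence xy': "(x,y) \<in> rel n p" using IH by simp
        show ?thesis
        proof (cases "z = n")
          case zn: True
          from edge zn have "y = a \<or> y = b" using b pinj yl by auto
          thus ?thesis
          proof
            assume "y = a" thus ?thesis using xy' ab zn rel_trans by blast
          next
            assume "y = b" thus ?thesis using xy' ab zn rel_trans rel_sym by blast
          qed
        next
          case zn: False
          have zl: "z < n" using step(4) zn by simp
          have "(y, z) \<in> rel n p"
          proof (cases "z = \<pi> y")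
            case True
            hence "y \<noteq> a" using a zl by auto
            thus ?thesis using rel_edge[of y n p] yl True po by simp
          next
            case False
            hence "y = \<pi> z" using edge by auto
            hence "z \<noteq> a" using a yl by auto
            thus ?thesis using rel_edge[of z n p] zl \<open>y = \<pi> z\<close> rel_sym po by metis
          qed
          thus ?thesis using xy' zn zl rel_trans by blast
        qed
      qed
    qed
  qed
  have equiv: "\<And>x y. x < n \<Longrightarrow> y < n \<Longrightarrow> (x,y) \<in> ?E \<longleftrightarrow> (x,y) \<in> rel n p"
    using dir1 dir2 by (meson subsetD)
  have "reps (Suc n) \<pi> = reps n p"
  proof (rule Set.set_eqI)
    fix x
    show "x \<in> reps (Suc n) \<pi> \<longleftrightarrow> x \<in> reps n p"
    proof (cases "x < n")
      case True
      then show ?thesis unfolding reps_def using equiv by (auto simp: less_Suc_eq)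
    next
      case False
      have "x \<notin> reps (Suc n) \<pi>"
      proof
        assume "x \<in> reps (Suc n) \<pi>"
        hence "x = n" "\<forall>y<Suc n. (x,y) \<in> ?E \<longrightarrow> x \<le> y" using False unfolding reps_def by auto
        moreover have "(n,a) \<in> ?E" using rel_sym[OF an] .
        ultimately have "n \<le> a" using a by auto
        thus False using a by simp
      qed
      then show ?thesis using False unfolding reps_def by auto
    qed
  qed
  thus ?thesis unfolding p_def .
qed

definition Mx :: "nat \<Rightarrow> (nat \<Rightarrow> nat) \<Rightarrow> (nat \<Rightarrow> nat) \<Rightarrow> int poly mat" where
  "Mx n k \<pi> = mat n n (\<lambda>(i,j). (if i = j then [:0,1:]^(k i) else 0) - (if j = \<pi> i then 1 else 0))"

lemma Mx_carrier: "Mx n k \<pi> \<in> carrier_mat n n" unfolding Mx_def by simp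

lemma Mx_index: "i < n \<Longrightarrow> j < n \<Longrightarrow> Mx n k \<pi> $$ (i,j) =
   (if i = j then [:0,1:]^(k i) else 0) - (if j = \<pi> i then 1 else 0)"
  unfolding Mx_def by simp

lemma det_Mx:
  "(\<forall>i<n. \<pi> i < n) \<Longrightarrow> inj_on \<pi> {..<n} \<Longrightarrow> (\<forall>i<n. k i > 0) \<Longrightarrow>
   det (Mx n k \<pi>) \<noteq> 0 \<and> order 1 (det (Mx n k \<pi>)) = card (reps n \<pi>)"
proof (induction n arbitrary: \<pi> k)
  case 0
  have "det (Mx 0 k \<pi>) = 1" using Mx_carrier by (rule det_dim_zero)
  moreover have "reps 0 \<pi> = {}" unfolding reps_def by simp
  ultimately show ?case by simp
next
  case (Suc n)
  note into = Suc.prems(1) and inj = Suc.prems(2) and kpos = Suc.prems(3)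
  let ?X = "[:0,1::int:]"
  have pinj: "\<And>x y. x < Suc n \<Longrightarrow> y < Suc n \<Longrightarrow> \<pi> x = \<pi> y \<Longrightarrow> x = y"
    using inj unfolding inj_on_def by auto
  show ?case
  proof (cases "\<pi> n = n")
    case True
    have into': "\<forall>i<n. \<pi> i < n"
    proof (intro allI impI)
      fix i assume i: "i < n"
      have "\<pi> i \<noteq> n" using pinj[of i n] True i by auto
      thus "\<pi> i < n" using into i by (metis less_SucE less_SucI)
    qed
    have inj': "inj_on \<pi> {..<n}" using inj by (rule inj_on_subset) auto
    have kpos': "\<forall>i<n. k i > 0" using kpos by auto
    from Suc.IH[OF into' inj' kpos'] have IH: "det (Mx n k \<pi>) \<noteq> 0"
      "order 1 (det (Mx n k \<pi>)) = card (reps n \<pi>)" by auto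
    let ?D = "mat 1 1 (\<lambda>_. ?X^(k n) - 1)"
    have blk: "Mx (Suc n) k \<pi> = four_block_mat (Mx n k \<pi>) (0\<^sub>m n 1) (0\<^sub>m 1 n) ?D"
    proof (rule eq_matI)
      fix i j assume i: "i < dim_row (four_block_mat (Mx n k \<pi>) (0\<^sub>m n 1) (0\<^sub>m 1 n) ?D)"
        and j: "j < dim_col (four_block_mat (Mx n k \<pi>) (0\<^sub>m n 1) (0\<^sub>m 1 n) ?D)"
      from i j have i': "i < Suc n" and j': "j < Suc n" using Mx_carrier[of n k \<pi>] by auto
      have "\<And>i. i < n \<Longrightarrow> \<pi> i \<noteq> n" using into' by auto
      thus "Mx (Suc n) k \<pi> $$ (i, j) = four_block_mat (Mx n k \<pi>) (0\<^sub>m n 1) (0\<^sub>m 1 n) ?D $$ (i, j)"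
        using i' j' True Mx_carrier[of n k \<pi>]
        by (auto simp: Mx_index less_Suc_eq)
    qed (use Mx_carrier[of n k \<pi>] in \<open>auto simp: Mx_def\<close>)
    have "det (Mx (Suc n) k \<pi>) = det (Mx n k \<pi>) * det ?D"
      unfolding blk by (rule det_four_block_mat_upper_right_zero_col[OF Mx_carrier]) auto
    also have "det ?D = ?X^(k n) - 1" by (subst det_single) auto
    finally have d: "det (Mx (Suc n) k \<pi>) = det (Mx n k \<pi>) * (?X^(k n) - 1)" .
    have kn: "k n > 0" using kpos by auto
    note ox = order_Xk_minus_1[OF kn]
    have nz: "det (Mx (Suc n) k \<pi>) \<noteq> 0" unfolding d using IH(1) ox(2) by simp
    have "order 1 (det (Mx (Suc n) k \<pi>)) = card (reps n \<pi>) + 1"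
      using nz unfolding d by (subst order_mult) (use IH ox in auto)
    also have "\<dots> = card (reps (Suc n) \<pi>)"
      using reps_fixed[of n \<pi>] into' True by (simp add: reps_def)
    finally show ?thesis using nz by simp
  next
    case False
    have "\<pi> ` {..<Suc n} = {..<Suc n}"
      by (rule endo_inj_surj) (use into inj in auto)
    then obtain a where a0: "a < Suc n" "\<pi> a = n" by (metis imageE lessThan_iff lessI)
    have an: "a \<noteq> n" using a0 False by auto
    hence a: "a < n" "\<pi> a = n" using a0 by auto
    define b where "b = \<pi> n"
    have bn: "b \<noteq> n" using False b_def by auto
    have b: "b < n" "\<pi> n = b" using into bn b_def by (auto simp: less_Suc_eq)
    define p where "p = \<pi>(a := b)"
    define k' where "k' = k(a := k a + k n)"
    have pa: "p a = b" and po: "\<And>x. x \<noteq> a \<Longrightarrow> p x = \<pi> x" unfolding p_def by auto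
    have into': "\<forall>i<n. p i < n"
    proof (intro allI impI)
      fix i assume i: "i < n"
      show "p i < n"
      proof (cases "i = a")
        case True then show ?thesis using pa b by simp
      next
        case False
        have "\<pi> i \<noteq> n" using pinj[of i a] a i False by auto
        thus ?thesis using into i po[OF False] by (metis less_SucE less_SucI)
      qed
    qed
    have inj': "inj_on p {..<n}"
    proof (rule inj_onI)
      fix x y assume x: "x \<in> {..<n}" and y: "y \<in> {..<n}" and e: "p x = p y"
      show "x = y"
      proof (cases "x = a"; cases "y = a")
        assume "x = a" "y \<noteq> a"
        hence "\<pi> y = \<pi> n" using e pa po b by auto
        thus ?thesis using pinj[of y n] y by auto
      next
        assume "x \<noteq> a" "y = a"
        hence "\<pi> x = \<pi> n" using e pa po b by auto
        thus ?thesis using pinj[of x n] x by auto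
      next
        assume "x \<noteq> a" "y \<noteq> a"
        thus ?thesis using e po pinj[of x y] x y by auto
      qed simp
    qed
    have kpos': "\<forall>i<n. k' i > 0" using kpos unfolding k'_def by auto
    from Suc.IH[OF into' inj' kpos'] have IH: "det (Mx n k' p) \<noteq> 0"
      "order 1 (det (Mx n k' p)) = card (reps n p)" by auto
    let ?A = "Mx (Suc n) k \<pi>"
    let ?B = "addrow 1 a n (multrow a (?X^(k n)) ?A)"
    let ?C = "mat 1 n (\<lambda>(_,j). - (if j = b then 1 else 0)) :: int poly mat"
    let ?D = "mat 1 1 (\<lambda>_. ?X^(k n))"
    have A: "?A \<in> carrier_mat (Suc n) (Suc n)" by (rule Mx_carrier)
    have dB: "det ?B = ?X^(k n) * det ?A"
    proof -
      have "det ?B = det (multrow a (?X^(k n)) ?A)"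
        by (rule det_addrow[of n "Suc n"]) (use an A in auto)
      also have "\<dots> = ?X^(k n) * det ?A"
        by (rule det_multrow) (use a A in auto)
      finally show ?thesis .
    qed
    have blk: "?B = four_block_mat (Mx n k' p) (0\<^sub>m n 1) ?C ?D"
    proof (rule eq_matI)
      fix i j assume i: "i < dim_row (four_block_mat (Mx n k' p) (0\<^sub>m n 1) ?C ?D)"
        and j: "j < dim_col (four_block_mat (Mx n k' p) (0\<^sub>m n 1) ?C ?D)"
      from i j have i': "i < Suc n" and j': "j < Suc n" using Mx_carrier[of n k' p] by auto
      have Aij: "\<And>i j. i < Suc n \<Longrightarrow> j < Suc n \<Longrightarrow> ?A $$ (i,j) =
         (if i = j then ?X^(k i) else 0) - (if j = \<pi> i then 1 else 0)" by (rule Mx_index)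
      have Bij: "?B $$ (i,j) = (if i = a then ?A $$ (n,j) + ?X^(k n) * ?A $$ (a,j) else ?A $$ (i,j))"
        using i' j' A an by auto
      have F: "four_block_mat (Mx n k' p) (0\<^sub>m n 1) ?C ?D $$ (i,j) =
        (if i < n then (if j < n then Mx n k' p $$ (i,j) else 0)
         else (if j < n then ?C $$ (0, j) else ?X^(k n)))"
        using i' j' Mx_carrier[of n k' p] by auto
      show "?B $$ (i, j) = four_block_mat (Mx n k' p) (0\<^sub>m n 1) ?C ?D $$ (i, j)"
      proof (cases "i < n")
        case il: True
        show ?thesis
        proof (cases "j < n")
          case jl: True
          show ?thesis
          proof (cases "i = a")
            case True
            have "?B $$ (i,j) = (if n = j then ?X^(k n) else 0) - (if j = b then 1 else 0)
                + ?X^(k n) * ((if a = j then ?X^(k a) else 0) - (if j = n then 1 else 0))"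
              unfolding Bij using True Aij[of n j] Aij[of a j] a b il jl by simp
            also have "\<dots> = (if a = j then ?X^(k' a) else 0) - (if j = p a then 1 else 0)"
              using jl pa unfolding k'_def by (auto simp: power_add algebra_simps)
            finally show ?thesis unfolding F using il jl True Mx_index[of a n j k' p] a by simp
          next
            case False
            have "\<pi> i \<noteq> n" using pinj[of i a] a il False by auto
            thus ?thesis unfolding Bij F using il jl False Aij[of i j] Mx_index[of i n j k' p] po[OF False]
              unfolding k'_def by auto
          qed
        next
          case jn: False
          hence jn: "j = n" using j' by simp
          show ?thesis
          proof (cases "i = a")
            case True
            show ?thesis unfolding Bij F using True jn Aij[of n n] Aij[of a n] a an b bn by simp
          next
            case False
            have "\<pi> i \<noteq> n" using pinj[of i a] a il False by auto
            thus ?thesis unfolding Bij F using il jn False Aij[of i n] by auto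
          qed
        qed
      next
        case False
        hence iN: "i = n" using i' by simp
        show ?thesis unfolding Bij F using iN an j' Aij[of n j] b by (auto simp: less_Suc_eq)
      qed
    qed (use Mx_carrier[of n k' p] A in auto)
    have "det ?B = det (Mx n k' p) * det ?D"
      unfolding blk by (rule det_four_block_mat_upper_right_zero_col[OF Mx_carrier]) auto
    also have "det ?D = ?X^(k n)" by (subst det_single) auto
    finally have "?X^(k n) * det ?A = ?X^(k n) * det (Mx n k' p)" unfolding dB by (simp add: mult.commute)
    hence dA: "det ?A = det (Mx n k' p)" by simp
    have "reps (Suc n) \<pi> = reps n p"
      unfolding p_def by (rule reps_nonfixed[OF _ inj a b]) (use into in auto)
    thus ?thesis using dA IH by simp
  qed
qed

lemma psum_Suc: "i < length xs \<Longrightarrow> psum xs (Suc i) = psum xs i + xs ! i"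
  unfolding psum_def by (simp add: take_Suc_conv_app_nth)

lemma psum_mono: "i \<le> j \<Longrightarrow> psum xs i \<le> psum xs j"
proof -
  assume "i \<le> j"
  then obtain d where "j = i + d" by (metis le_add_diff_inverse)
  thus ?thesis unfolding psum_def by (simp add: take_add)
qed

lemma psum_len: "psum xs (length xs) = sum_list xs"
  unfolding psum_def by simp

lemma psum_exists: "r \<le> length xs \<Longrightarrow> a < psum xs r \<Longrightarrow> \<exists>i<r. psum xs i \<le> a \<and> a < psum xs (Suc i)"
proof (induction r)
  case 0 then show ?case by (simp add: psum_def)
next
  case (Suc r)
  show ?case
  proof (cases "a < psum xs r")
    case True
    from Suc.IH[OF _ True] Suc.prems obtain i where "i < r" "psum xs i \<le> a" "a < psum xs (Suc i)" by auto
    then show ?thesis by (intro exI[of _ i]) auto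
  next
    case False then show ?thesis using Suc.prems by (intro exI[of _ r]) auto
  qed
qed

lemma psum_unique:
  assumes "i < r" "psum xs i \<le> a" "a < psum xs (Suc i)" "j < r" "psum xs j \<le> a" "a < psum xs (Suc j)"
  shows "i = j"
proof (rule ccontr)
  assume "i \<noteq> j"
  hence "Suc i \<le> j \<or> Suc j \<le> i" by auto
  thus False
  proof
    assume "Suc i \<le> j"
    from psum_mono[OF this, of xs] show False using assms(3,5) by linarith
  next
    assume "Suc j \<le> i"
    from psum_mono[OF this, of xs] show False using assms(2,6) by linarith
  qed
qed

lemma psum_the:
  assumes "i < r" "psum xs i \<le> a" "a < psum xs (Suc i)"
  shows "(THE i. i < r \<and> psum xs i \<le> a \<and> a < psum xs (Suc i)) = i"
proof (rule the_equality)
  show "i < r \<and> psum xs i \<le> a \<and> a < psum xs (Suc i)" using assms by simp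
next
  fix j assume "j < r \<and> psum xs j \<le> a \<and> a < psum xs (Suc j)"
  thus "j = i" using psum_unique[of i r xs a j] assms by simp
qed

context
  fixes ps qs :: "nat list"
  assumes ok: "lorenz_params_ok ps qs"
begin

abbreviation "r \<equiv> length ps"
abbreviation "P \<equiv> psum ps"
abbreviation "Q \<equiv> psum qs"

lemma lq: "length qs = r" using ok unfolding lorenz_params_ok_def by simp

lemma nval: "lorenz_strands ps qs = Q r + P r"
  unfolding lorenz_strands_def using lq psum_len[of ps] psum_len[of qs] by simp

lemma end_left:
  assumes i: "i < r" and k: "k < qs ! i"
  shows "lorenz_end ps qs (Q i + k) = P (Suc i) + Q i + k"
proof -
  have s: "Q (Suc i) = Q i + qs ! i" using psum_Suc[of i qs] i lq by simp
  have lt: "Q i + k < Q r" using s k psum_mono[of "Suc i" r qs] i by simp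
  have th: "(THE j. j < r \<and> Q j \<le> Q i + k \<and> Q i + k < Q (Suc j)) = i"
    by (rule psum_the) (use i k s in auto)
  show ?thesis unfolding lorenz_end_def Let_def using lt th by simp
qed

lemma end_right:
  assumes i: "i < r" and k: "k < ps ! i"
  shows "lorenz_end ps qs (Q r + (P i + k)) = P i + Q i + k"
proof -
  have s: "P (Suc i) = P i + ps ! i" using psum_Suc[of i ps] i by simp
  have th: "(THE j. j < r \<and> P j \<le> P i + k \<and> P i + k < P (Suc j)) = i"
    by (rule psum_the) (use i k s in auto)
  show ?thesis unfolding lorenz_end_def Let_def using th by simp
qed

lemma decomp:
  assumes a: "a < lorenz_strands ps qs"
  shows "\<exists>i<r. \<exists>k. (k < qs ! i \<and> a = Q i + k) \<or> (k < ps ! i \<and> a = Q r + (P i + k))"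
proof (cases "a < Q r")
  case True
  then obtain i where i: "i < r" "Q i \<le> a" "a < Q (Suc i)" using psum_exists[of r qs a] lq by auto
  have "Q (Suc i) = Q i + qs ! i" using psum_Suc[of i qs] i lq by simp
  hence "a - Q i < qs ! i \<and> a = Q i + (a - Q i)" using i by auto
  thus ?thesis using i by blast
next
  case False
  hence "a - Q r < P r" using a nval by auto
  then obtain i where i: "i < r" "P i \<le> a - Q r" "a - Q r < P (Suc i)" using psum_exists[of r ps "a - Q r"] by auto
  have "P (Suc i) = P i + ps ! i" using psum_Suc[of i ps] i by simp
  hence "a - Q r - P i < ps ! i \<and> a = Q r + (P i + (a - Q r - P i))" using i False by auto
  thus ?thesis using i by blast
qed

lemma qmono: "i < j \<Longrightarrow> j \<le> r \<Longrightarrow> Q (Suc i) \<le> Q j" by (rule psum_mono) simp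
lemma pmono: "i < j \<Longrightarrow> j \<le> r \<Longrightarrow> P (Suc i) \<le> P j" by (rule psum_mono) simp
lemma qs_s: "i < r \<Longrightarrow> Q (Suc i) = Q i + qs ! i" using psum_Suc[of i qs] lq by simp
lemma ps_s: "i < r \<Longrightarrow> P (Suc i) = P i + ps ! i" using psum_Suc[of i ps] by simp
lemma qle: "i \<le> j \<Longrightarrow> Q i \<le> Q j" by (rule psum_mono)
lemma ple: "i \<le> j \<Longrightarrow> P i \<le> P j" by (rule psum_mono)

lemma end_into:
  assumes a: "a < lorenz_strands ps qs"
  shows "lorenz_end ps qs a < lorenz_strands ps qs"
proof -
  from decomp[OF a] obtain i k where i: "i < r" and
    c: "(k < qs ! i \<and> a = Q i + k) \<or> (k < ps ! i \<and> a = Q r + (P i + k))" by blast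
  from c show ?thesis
  proof
    assume h: "k < qs ! i \<and> a = Q i + k"
    hence "lorenz_end ps qs a = P (Suc i) + Q i + k" using end_left i by simp
    moreover have "P (Suc i) \<le> P r" "Q (Suc i) \<le> Q r" using i ple qle by auto
    ultimately show ?thesis using qs_s[OF i] h nval by simp
  next
    assume h: "k < ps ! i \<and> a = Q r + (P i + k)"
    hence "lorenz_end ps qs a = P i + Q i + k" using end_right i by simp
    moreover have "P (Suc i) \<le> P r" "Q i \<le> Q r" using i ple qle by auto
    ultimately show ?thesis using ps_s[OF i] h nval by simp
  qed
qed

lemma end_inj: "inj_on (lorenz_end ps qs) {..<lorenz_strands ps qs}"
proof (rule inj_onI)
  fix a a' assume a: "a \<in> {..<lorenz_strands ps qs}" and a': "a' \<in> {..<lorenz_strands ps qs}"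
    and e: "lorenz_end ps qs a = lorenz_end ps qs a'"
  from decomp a obtain i k where i: "i < r" and
    c: "(k < qs ! i \<and> a = Q i + k) \<or> (k < ps ! i \<and> a = Q r + (P i + k))" by blast
  from decomp a' obtain j l where j: "j < r" and
    c': "(l < qs ! j \<and> a' = Q j + l) \<or> (l < ps ! j \<and> a' = Q r + (P j + l))" by blast
  have mij: "i < j \<Longrightarrow> Q (Suc i) \<le> Q j \<and> P (Suc i) \<le> P j" using qmono pmono j by auto
  have mji: "j < i \<Longrightarrow> Q (Suc j) \<le> Q i \<and> P (Suc j) \<le> P i" using qmono pmono i by auto
  have mij': "i \<le> j \<Longrightarrow> Q i \<le> Q j \<and> P i \<le> P j" using qle ple by auto
  have mji': "j \<le> i \<Longrightarrow> Q j \<le> Q i \<and> P j \<le> P i" using qle ple by auto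
  note ss = qs_s[OF i] ps_s[OF i] qs_s[OF j] ps_s[OF j]
  have lin: "i < j \<or> i = j \<or> j < i" by auto
  have pss: "\<And>x y. x \<le> y \<Longrightarrow> P x \<le> P y" "\<And>x y. x \<le> y \<Longrightarrow> Q x \<le> Q y" using ple qle by auto
  from c c' show "a = a'"
  proof (elim disjE conjE)
    assume h: "k < qs ! i" "a = Q i + k" "l < qs ! j" "a' = Q j + l"
    have E: "P (Suc i) + Q i + k = P (Suc j) + Q j + l" using e h end_left i j by simp
    consider "i < j" | "i = j" | "j < i" by linarith
    thus ?thesis
    proof cases
      case 1
      thus ?thesis using E h(1) ss(1) mij pss(1)[of "Suc i" "Suc j"] by linarith
    next
      case 2 thus ?thesis using E h by simp
    next
      case 3
      thus ?thesis using E h(3) ss(3) mji pss(1)[of "Suc j" "Suc i"] by linarith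
    qed
  next
    assume h: "k < qs ! i" "a = Q i + k" "l < ps ! j" "a' = Q r + (P j + l)"
    have E: "P (Suc i) + Q i + k = P j + Q j + l" using e h end_left end_right i j by simp
    consider "i < j" | "j \<le> i" by linarith
    thus ?thesis
    proof cases
      case 1
      thus ?thesis using E h(1) ss(1) mij by linarith
    next
      case 2
      thus ?thesis using E h(3) ss(4) mji' pss(1)[of "Suc j" "Suc i"] by linarith
    qed
  next
    assume h: "k < ps ! i" "a = Q r + (P i + k)" "l < qs ! j" "a' = Q j + l"
    have E: "P i + Q i + k = P (Suc j) + Q j + l" using e h end_left end_right i j by simp
    consider "j < i" | "i \<le> j" by linarith
    thus ?thesis
    proof cases
      case 1
      thus ?thesis using E h(3) ss(3) mji by linarith
    next
      case 2
      thus ?thesis using E h(1) ss(2) mij' pss(1)[of "Suc i" "Suc j"] by linarith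
    qed
  next
    assume h: "k < ps ! i" "a = Q r + (P i + k)" "l < ps ! j" "a' = Q r + (P j + l)"
    have E: "P i + Q i + k = P j + Q j + l" using e h end_right i j by simp
    consider "i < j" | "i = j" | "j < i" by linarith
    thus ?thesis
    proof cases
      case 1
      thus ?thesis using E h(1) ss(2) mij pss(2)[of i j] by linarith
    next
      case 2 thus ?thesis using E h by simp
    next
      case 3
      thus ?thesis using E h(3) ss(4) mji pss(2)[of j i] by linarith
    qed
  qed
qed

lemma M_entry:
  assumes a: "a < lorenz_strands ps qs" and b: "b < lorenz_strands ps qs"
  shows "lorenz_M ps qs $$ (a,b) = (if b = lorenz_end ps qs a then 1 else 0)"
proof -
  let ?C = "\<exists>i<r. \<exists>k. (k < qs ! i \<and> a = Q i + k \<and> b = P (Suc i) + Q i + k)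
                   \<or> (k < ps ! i \<and> a = Q r + P i + k \<and> b = P i + Q i + k)"
  have M: "lorenz_M ps qs $$ (a,b) = (if ?C then 1 else 0)"
    unfolding lorenz_M_def Let_def using a b by simp
  have "?C \<longleftrightarrow> b = lorenz_end ps qs a"
  proof
    assume ?C
    then obtain i k where i: "i < r" and
      h: "(k < qs ! i \<and> a = Q i + k \<and> b = P (Suc i) + Q i + k)
                   \<or> (k < ps ! i \<and> a = Q r + P i + k \<and> b = P i + Q i + k)" by blast
    thus "b = lorenz_end ps qs a"
    proof (elim disjE conjE)
      assume "k < qs ! i" "a = Q i + k" "b = P (Suc i) + Q i + k"
      thus ?thesis using end_left[OF i] by simp
    next
      assume "k < ps ! i" "a = Q r + P i + k" "b = P i + Q i + k"
      thus ?thesis using end_right[OF i] by (simp add: add.assoc)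
    qed
  next
    assume e: "b = lorenz_end ps qs a"
    from decomp[OF a] obtain i k where i: "i < r" and
      c: "(k < qs ! i \<and> a = Q i + k) \<or> (k < ps ! i \<and> a = Q r + (P i + k))" by blast
    thus ?C
    proof (elim disjE conjE)
      assume h: "k < qs ! i" "a = Q i + k"
      hence "b = P (Suc i) + Q i + k" using e end_left[OF i] by simp
      thus ?C using h i by blast
    next
      assume h: "k < ps ! i" "a = Q r + (P i + k)"
      hence "b = P i + Q i + k" using e end_right[OF i] by simp
      moreover have "a = Q r + P i + k" using h by simp
      ultimately show ?C using h i by blast
    qed
  qed
  thus ?thesis using M by simp
qed

end

theorem corollary6p11:
  fixes ps qs :: "nat list"
  assumes "lorenz_params_ok ps qs"
  shows "lorenz_link_components ps qs = order 1 (char_poly (lorenz_M ps qs))"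
proof -
  define n where "n = lorenz_strands ps qs"
  define \<pi> where "\<pi> = lorenz_end ps qs"
  have into: "\<forall>i<n. \<pi> i < n" using end_into[OF assms] unfolding n_def \<pi>_def by auto
  have inj: "inj_on \<pi> {..<n}" using end_inj[OF assms] unfolding n_def \<pi>_def .
  have Mc: "lorenz_M ps qs \<in> carrier_mat n n" unfolding lorenz_M_def Let_def n_def by simp
  have cpm: "char_poly_matrix (lorenz_M ps qs) = Mx n (\<lambda>_. 1) \<pi>"
  proof (rule eq_matI)
    fix i j assume i: "i < dim_row (Mx n (\<lambda>_. 1) \<pi>)" and j: "j < dim_col (Mx n (\<lambda>_. 1) \<pi>)"
    hence i': "i < n" and j': "j < n" using Mx_carrier[of n "\<lambda>_. 1" \<pi>] by auto
    have "lorenz_M ps qs $$ (i,j) = (if j = \<pi> i then 1 else 0)"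
      using M_entry[OF assms, of i j] i' j' unfolding n_def \<pi>_def by simp
    thus "char_poly_matrix (lorenz_M ps qs) $$ (i, j) = Mx n (\<lambda>_. 1) \<pi> $$ (i, j)"
      using i' j' Mc unfolding char_poly_matrix_def by (auto simp: Mx_index)
  qed (use Mc Mx_carrier[of n "\<lambda>_. 1" \<pi>] in \<open>auto simp: char_poly_matrix_def\<close>)
  have "order 1 (char_poly (lorenz_M ps qs)) = card (reps n \<pi>)"
    unfolding char_poly_def cpm using det_Mx[OF into inj] by simp
  moreover have "lorenz_link_components ps qs = card (reps n \<pi>)"
    unfolding lorenz_link_components_def n_def[symmetric] \<pi>_def[symmetric]
    by (rule closure_components_reps) (use into in auto)
  ultimately show ?thesis by simp
qed

end
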